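(* Let $\mathcal{H}$ be a real Hilbert space, let $\Gamma\subseteq\mathbb{R}_{++}$ be nonempty, let $\beta\in[0,1)$ and let $(T_\gamma)_{\gamma\in\Gamma}$ be a family of $\beta$-contractions on $\mathcal{H}$ with $\operatorname{Fix}T_\gamma\neq\emptyset$ for all $\gamma\in\Gamma$. Let $(\mathcal{Q}_{\delta\leftarrow\gamma})_{\gamma,\delta\in\Gamma}$ be fixed-point relocators for $(T_\gamma)_{\gamma\in\Gamma}$ with Lipschitz constants $(\mathcal{L}_{\delta\leftarrow\gamma})_{\gamma,\delta\in\Gamma}$ in $[1,+\infty)$. Suppose that: (1) for each bounded subset $S\subseteq\bigcup_{\gamma\in\Gamma}(\operatorname{Fix}T_\gamma\times\{\gamma\})$ there exists $L>0$ with $\|\mathcal{Q}_{\delta\leftarrow\gamma}x-\mathcal{Q}_{\gamma\leftarrow\gamma}x\|\le L|\delta-\gamma|$ for all $\delta\in\Gamma$ and all $(x,\gamma)\in S$; (2) the map $\mathcal{H}\times\Gamma\to\mathcal{H}$, $(x,\gamma)\mapsto T_\gamma x$, is continuous; (3) $(\gamma_n)_{n\in\mathbb{N}}\subseteq\Gamma$ converges $R$-linearly to some $\gamma^*\in\Gamma$, and $\sum_{n\in\mathbb{N}}(\mathcal{L}_{\gamma_{n+1}\leftarrow\gamma_n}-1)<+\infty$. Given $x_0\in\mathcal{H}$, define $x_{n+1}:=\mathcal{Q}_{\gamma_{n+1}\leftarrow\gamma_n}T_{\gamma_n}x_n$ for all $n\in\mathbb{N}$. Then (i) $(\operatorname{dist}(x_n,\operatorname{Fix}T_{\gamma_n}))_{n\in\mathbb{N}}$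 converges $R$-linearly to zero, and (ii) $(x_n)_{n\in\mathbb{N}}$ and $(T_{\gamma_n}x_n)_{n\in\mathbb{N}}$ converge $R$-linearly to the same point in $\operatorname{Fix}T_{\gamma^*}$.
   Context: A $\beta$-contraction is a map $T$ with $\|Tx-Ty\|\le\beta\|x-y\|$ for all $x,y$, where $\beta\in[0,1)$. $\operatorname{Fix}T=\{x:Tx=x\}$, $\operatorname{dist}(x,C)=\inf_{y\in C}\|x-y\|$. Fixed-point relocators: given a nonempty $\Gamma\subseteq\mathbb{R}_{++}$ and operators $(T_\gamma)_{\gamma\in\Gamma}$ on $\mathcal{H}$, a family of operators $(\mathcal{Q}_{\delta\leftarrow\gamma})_{\delta,\gamma\in\Gamma}$ on $\mathcal{H}$ is called fixed-point relocators for $(T_\gamma)$ with Lipschitz constants $(\mathcal{L}_{\delta\leftarrow\gamma})$ in $[1,\infty)$ if: (a) for all $\gamma,\delta\in\Gamma$, the restriction of $\mathcal{Q}_{\delta\leftarrow\gamma}$ to $\operatorname{Fix}T_\gamma$ is a bijection from $\operatorname{Fix}T_\gamma$ onto $\operatorname{Fix}T_\delta$; (b) for all $\gamma\in\Gamma$ and $x\in\operatorname{Fix}T_\gamma$, $\delta\mapsto\mathcal{Q}_{\delta\leftarrow\gamma}x$ is continuous on $\Gamma$; (c) for all $\gamma,\delta,\epsilon\in\Gamma$ and $x\in\operatorname{Fix}T_\gamma$, $\mathcal{Q}_{\epsilon\leftarrow\delta}\mathcal{Q}_{\delta\leftarrow\gamma}x=\mathcal{Q}_{\epsilon\leftarrow\gamma}x$;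 (d) each $\mathcal{Q}_{\delta\leftarrow\gamma}$ is $\mathcal{L}_{\delta\leftarrow\gamma}$-Lipschitz. A sequence $(a_n)$ converges $R$-linearly to $a$ if there exist $C\ge0$, $r\in(0,1)$ with $\|a_n-a\|\le Cr^n$ for all $n$. *)

theory Defs
  imports "HOL-Analysis.Analysis"
begin

definition fixset :: "('a \<Rightarrow> 'a) \<Rightarrow> 'a set" where
  "fixset T = {x. T x = x}"

definition contraction_with :: "real \<Rightarrow> ('a::real_normed_vector \<Rightarrow> 'a) \<Rightarrow> bool" where
  "contraction_with \<beta> T \<longleftrightarrow> 0 \<le> \<beta> \<and> \<beta> < 1 \<and> (\<forall>x y. norm (T x - T y) \<le> \<beta> * norm (x - y))"

text \<open>Q d g stands for the relocator Q_(d <- g); Lc d g for its Lipschitz constant.\<close>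
definition fixed_point_relocators ::
  "real set \<Rightarrow> (real \<Rightarrow> 'a::real_normed_vector \<Rightarrow> 'a) \<Rightarrow> (real \<Rightarrow> real \<Rightarrow> 'a \<Rightarrow> 'a)
     \<Rightarrow> (real \<Rightarrow> real \<Rightarrow> real) \<Rightarrow> bool" where
  "fixed_point_relocators \<Gamma> T Q Lc \<longleftrightarrow>
     (\<forall>g\<in>\<Gamma>. \<forall>d\<in>\<Gamma>. bij_betw (Q d g) (fixset (T g)) (fixset (T d))) \<and>
     (\<forall>g\<in>\<Gamma>. \<forall>x\<in>fixset (T g). continuous_on \<Gamma> (\<lambda>d. Q d g x)) \<and>
     (\<forall>g\<in>\<Gamma>. \<forall>d\<in>\<Gamma>. \<forall>e\<in>\<Gamma>. \<forall>x\<in>fixset (T g). Q e d (Q d g x) = Q e g x) \<and>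
     (\<forall>g\<in>\<Gamma>. \<forall>d\<in>\<Gamma>. 1 \<le> Lc d g \<and> (\<forall>x y. norm (Q d g x - Q d g y) \<le> Lc d g * norm (x - y)))"

definition R_linear_conv :: "(nat \<Rightarrow> 'a::real_normed_vector) \<Rightarrow> 'a \<Rightarrow> bool" where
  "R_linear_conv a l \<longleftrightarrow> (\<exists>C r. 0 \<le> C \<and> 0 < r \<and> r < 1 \<and> (\<forall>n. norm (a n - l) \<le> C * r ^ n))"

end

theory Submission
  imports Defs
begin

theorem corollary3p8:
  fixes \<Gamma> :: "real set" and \<beta> :: real
    and T :: "real \<Rightarrow> 'a::{real_inner, complete_space} \<Rightarrow> 'a"
    and Q :: "real \<Rightarrow> real \<Rightarrow> 'a \<Rightarrow> 'a" and Lc :: "real \<Rightarrow> real \<Rightarrow> real"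
    and gam :: "nat \<Rightarrow> real" and gstar :: real and x :: "nat \<Rightarrow> 'a"
  assumes Gamma_pos: "\<Gamma> \<subseteq> {0<..}" and Gamma_ne: "\<Gamma> \<noteq> {}"
    and beta: "0 \<le> \<beta>" "\<beta> < 1"
    and contr: "\<forall>g\<in>\<Gamma>. contraction_with \<beta> (T g)"
    and fix_ne: "\<forall>g\<in>\<Gamma>. fixset (T g) \<noteq> {}"
    and reloc: "fixed_point_relocators \<Gamma> T Q Lc"
    and cond1: "\<forall>S. bounded S \<and> S \<subseteq> (\<Union>g\<in>\<Gamma>. fixset (T g) \<times> {g}) \<longrightarrow>
                  (\<exists>L>0. \<forall>d\<in>\<Gamma>. \<forall>(y, g)\<in>S. norm (Q d g y - Q g g y) \<le> L * \<bar>d - g\<bar>)"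
    and cond2: "continuous_on (UNIV \<times> \<Gamma>) (\<lambda>(y, g). T g y)"
    and gam_in: "\<forall>n. gam n \<in> \<Gamma>" and gstar_in: "gstar \<in> \<Gamma>"
    and gam_conv: "R_linear_conv gam gstar"
    and Lsum: "summable (\<lambda>n. Lc (gam (Suc n)) (gam n) - 1)"
    and x_rec: "\<forall>n. x (Suc n) = Q (gam (Suc n)) (gam n) (T (gam n) (x n))"
  shows "R_linear_conv (\<lambda>n. infdist (x n) (fixset (T (gam n)))) 0 \<and>
         (\<exists>p\<in>fixset (T gstar). R_linear_conv x p \<and> R_linear_conv (\<lambda>n. T (gam n) (x n)) p)"
proof -
  define p where "p g = (SOME y. y \<in> fixset (T g))" for g
  have contrg: "norm (T g a - T g b) \<le> \<beta> * norm (a - b)" if "g \<in> \<Gamma>" for g a b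
    using contr that by (simp add: contraction_with_def)
  have pin: "p g \<in> fixset (T g)" if "g \<in> \<Gamma>" for g
    unfolding p_def using fix_ne that by (simp add: some_in_eq)
  have pT: "T g (p g) = p g" if "g \<in> \<Gamma>" for g
    using pin[OF that] by (simp add: fixset_def)
  have pfix: "fixset (T g) = {p g}" if g: "g \<in> \<Gamma>" for g
  proof -
    have "y = p g" if "y \<in> fixset (T g)" for y
    proof -
      have "norm (y - p g) \<le> \<beta> * norm (y - p g)"
        using contrg[OF g, of y "p g"] that pT[OF g] by (simp add: fixset_def)
      hence "(1 - \<beta>) * norm (y - p g) \<le> 0" by (simp add: algebra_simps)
      hence "norm (y - p g) \<le> 0" using beta
        by (simp add: mult_le_0_iff)
      thus ?thesis by simp
    qed
    thus ?thesis using pin[OF g] by blast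
  qed
  have bij: "bij_betw (Q d g) (fixset (T g)) (fixset (T d))" if "g \<in> \<Gamma>" "d \<in> \<Gamma>" for g d
    using reloc that unfolding fixed_point_relocators_def by blast
  have lip: "norm (Q d g a - Q d g b) \<le> Lc d g * norm (a - b)" and L1: "1 \<le> Lc d g"
    if "g \<in> \<Gamma>" "d \<in> \<Gamma>" for g d a b
    using reloc that unfolding fixed_point_relocators_def by blast+
  have hQ: "Q d g (p g) = p d" if "g \<in> \<Gamma>" "d \<in> \<Gamma>" for g d
    using bij_betw_apply[OF bij[OF that], of "p g"] pfix[OF that(1)] pfix[OF that(2)] by simp
  obtain L where L: "L > 0" "\<forall>d\<in>\<Gamma>. norm (p d - p gstar) \<le> L * \<bar>d - gstar\<bar>"
  proof -
    have "bounded {(p gstar, gstar)}" by simp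
    moreover have "{(p gstar, gstar)} \<subseteq> (\<Union>g\<in>\<Gamma>. fixset (T g) \<times> {g})"
      using gstar_in pin[OF gstar_in] by blast
    ultimately obtain L where "L > 0" and
      H: "\<forall>d\<in>\<Gamma>. \<forall>(y, g)\<in>{(p gstar, gstar)}. norm (Q d g y - Q g g y) \<le> L * \<bar>d - g\<bar>"
      using cond1 by blast
    have "\<forall>d\<in>\<Gamma>. norm (p d - p gstar) \<le> L * \<bar>d - gstar\<bar>"
      using H hQ gstar_in by simp
    thus ?thesis using that \<open>L > 0\<close> by blast
  qed
  define e where "e n = norm (x n - p (gam n))" for n
  define Lk where "Lk k = Lc (gam (Suc k)) (gam k)" for k
  define S where "S n = (\<Sum>k<n. Lk k - 1)" for n
  have step: "e (Suc n) \<le> Lk n * (\<beta> * e n)" for n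
  proof -
    have g: "gam n \<in> \<Gamma>" "gam (Suc n) \<in> \<Gamma>" using gam_in by auto
    have "e (Suc n) = norm (Q (gam (Suc n)) (gam n) (T (gam n) (x n))
                 - Q (gam (Suc n)) (gam n) (p (gam n)))"
      unfolding e_def using x_rec hQ[OF g] by simp
    also have "\<dots> \<le> Lk n * norm (T (gam n) (x n) - p (gam n))"
      unfolding Lk_def using lip[OF g] by blast
    also have "norm (T (gam n) (x n) - p (gam n)) \<le> \<beta> * e n"
      unfolding e_def using contrg[OF g(1), of "x n" "p (gam n)"] pT[OF g(1)] by simp
    hence "Lk n * norm (T (gam n) (x n) - p (gam n)) \<le> Lk n * (\<beta> * e n)"
      using L1[OF g] unfolding Lk_def by (intro mult_left_mono) auto
    finally show ?thesis .
  qed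
  have Lk1: "1 \<le> Lk k" for k unfolding Lk_def using L1 gam_in by blast
  have bnd: "e n \<le> e 0 * \<beta> ^ n * exp (S n)" for n
  proof (induction n)
    case 0 then show ?case by (simp add: S_def)
  next
    case (Suc n)
    have "e (Suc n) \<le> Lk n * (\<beta> * e n)" by (rule step)
    also have "\<dots> \<le> exp (Lk n - 1) * (\<beta> * (e 0 * \<beta> ^ n * exp (S n)))"
    proof (rule mult_mono)
      show "Lk n \<le> exp (Lk n - 1)" using exp_ge_add_one_self[of "Lk n - 1"] by simp
      show "\<beta> * e n \<le> \<beta> * (e 0 * \<beta> ^ n * exp (S n))" using Suc beta by (intro mult_left_mono) auto
      show "0 \<le> exp (Lk n - 1)" by simp
      show "0 \<le> \<beta> * e n" using beta by (simp add: e_def)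
    qed
    also have "\<dots> = e 0 * \<beta> ^ Suc n * exp (S (Suc n))"
    proof -
      have "exp (Lk n - 1) * exp (S n) = exp (S (Suc n))"
        by (simp add: S_def exp_add[symmetric] algebra_simps)
      thus ?thesis by (simp add: algebra_simps)
    qed
    finally show ?case .
  qed
  define K where "K = e 0 * exp (suminf (\<lambda>n. Lk n - 1))"
  have K0: "0 \<le> K" unfolding K_def e_def by simp
  have ebnd: "e n \<le> K * \<beta> ^ n" for n
  proof -
    have "S n \<le> suminf (\<lambda>n. Lk n - 1)" unfolding S_def
      using sum_le_suminf[of "\<lambda>n. Lk n - 1" "{..<n}"] Lsum Lk1 unfolding Lk_def by force
    hence "exp (S n) \<le> exp (suminf (\<lambda>n. Lk n - 1))" by simp
    hence "e 0 * \<beta> ^ n * exp (S n) \<le> e 0 * \<beta> ^ n * exp (suminf (\<lambda>n. Lk n - 1))"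
      using beta by (intro mult_left_mono) (auto simp: e_def)
    thus ?thesis using bnd[of n] unfolding K_def by (simp add: algebra_simps)
  qed
  obtain C r where Cr: "0 \<le> C" "0 < r" "r < 1" "\<forall>n. norm (gam n - gstar) \<le> C * r ^ n"
    using gam_conv unfolding R_linear_conv_def by blast
  define \<rho> where "\<rho> = max \<beta> r"
  have rho: "0 < \<rho>" "\<rho> < 1" "\<beta> \<le> \<rho>" "r \<le> \<rho>" using Cr beta unfolding \<rho>_def by auto
  have bpow: "\<beta> ^ n \<le> \<rho> ^ n" for n using rho beta by (intro power_mono) auto
  have rpow: "r ^ n \<le> \<rho> ^ n" for n using rho Cr by (intro power_mono) auto
  have e\<rho>: "e n \<le> K * \<rho> ^ n" for n
    using ebnd[of n] mult_left_mono[OF bpow[of n] K0] by linarith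
  have pbnd: "norm (p (gam n) - p gstar) \<le> L * C * \<rho> ^ n" for n
  proof -
    have "norm (p (gam n) - p gstar) \<le> L * \<bar>gam n - gstar\<bar>" using L gam_in by blast
    also have "\<dots> \<le> L * (C * r ^ n)" using Cr L by (intro mult_left_mono) auto
    also have "\<dots> \<le> L * (C * \<rho> ^ n)" using Cr L rpow by (intro mult_left_mono) auto
    finally show ?thesis by simp
  qed
  have part1: "R_linear_conv (\<lambda>n. infdist (x n) (fixset (T (gam n)))) 0"
    unfolding R_linear_conv_def
  proof (intro exI conjI allI)
    fix n
    have "infdist (x n) (fixset (T (gam n))) = e n"
      using pfix gam_in by (simp add: e_def dist_norm)
    moreover have "0 \<le> e n" by (simp add: e_def)
    ultimately show "norm (infdist (x n) (fixset (T (gam n))) - 0) \<le> K * \<rho> ^ n"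
      using e\<rho>[of n] by simp
  qed (use K0 rho in auto)
  have LC0: "0 \<le> L * C" using L Cr by simp
  have part2: "R_linear_conv x (p gstar)"
    unfolding R_linear_conv_def
  proof (intro exI conjI allI)
    fix n
    have "norm (x n - p gstar) \<le> e n + norm (p (gam n) - p gstar)"
      unfolding e_def by (metis norm_triangle_ineq diff_add_cancel add_diff_eq)
    also have "\<dots> \<le> K * \<rho> ^ n + L * C * \<rho> ^ n" using e\<rho> pbnd add_mono by blast
    finally show "norm (x n - p gstar) \<le> (K + L * C) * \<rho> ^ n" by (simp add: algebra_simps)
  qed (use K0 LC0 rho in auto)
  have part3: "R_linear_conv (\<lambda>n. T (gam n) (x n)) (p gstar)"
    unfolding R_linear_conv_def
  proof (intro exI conjI allI)
    fix n
    have g: "gam n \<in> \<Gamma>" using gam_in by simp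
    have a: "norm (T (gam n) (x n) - p (gam n)) \<le> e n"
    proof -
      have "norm (T (gam n) (x n) - p (gam n)) \<le> \<beta> * e n"
        unfolding e_def using contrg[OF g, of "x n" "p (gam n)"] pT[OF g] by simp
      also have "\<dots> \<le> e n" using beta by (intro mult_left_le_one_le) (auto simp: e_def)
      finally show ?thesis .
    qed
    have "norm (T (gam n) (x n) - p gstar) \<le> norm (T (gam n) (x n) - p (gam n)) + norm (p (gam n) - p gstar)"
      by (metis norm_triangle_ineq diff_add_cancel add_diff_eq)
    also have "\<dots> \<le> K * \<rho> ^ n + L * C * \<rho> ^ n" using a e\<rho>[of n] pbnd[of n] by linarith
    finally show "norm (T (gam n) (x n) - p gstar) \<le> (K + L * C) * \<rho> ^ n" by (simp add: algebra_simps)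
  qed (use K0 LC0 rho in auto)
  show ?thesis using part1 part2 part3 pin[OF gstar_in] by blast
qed

end
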